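(* Any incline $R$ with $|R|\geq 3$ is not $k$-simple.
   Context: A semiring $(R,+,\cdot)$ is a set with two binary operations such that $(R,+)$ is a commutative semigroup, $(R,\cdot)$ is a semigroup, and multiplication distributes over addition from both sides; no zero or identity is assumed. An incline is a semiring with $r+r=r$ for all $r$ and $x+xy=x=x+yx$ for all $x,y\in R$. A zero of $R$ is an element $0$ with $0+r=r$ and $0r=r0=0$ for all $r\in R$. An ideal of $R$ is a nonempty subset $A\subseteq R$ with $a+b\in A$ and $ra,ar\in A$ for all $a,b\in A$, $r\in R$; the trivial ideals are $R$ and, if $R$ has a zero $0$, $\{0\}$. For an ideal $A$, its $k$-closure is $\overline{A}=\{x\in R\mid x+a=b \text{ for some } a,b\in A\}$, and $A$ is a $k$-ideal if $A=\overline{A}$. $R$ is $k$-simple if it has no $k$-ideals other than the trivial ideals. *)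

theory Defs
  imports Main
begin

definition semiring_ops :: "('a \<Rightarrow> 'a \<Rightarrow> 'a) \<Rightarrow> ('a \<Rightarrow> 'a \<Rightarrow> 'a) \<Rightarrow> bool" where
  "semiring_ops add mul \<longleftrightarrow>
     (\<forall>a b c. add (add a b) c = add a (add b c)) \<and>
     (\<forall>a b. add a b = add b a) \<and>
     (\<forall>a b c. mul (mul a b) c = mul a (mul b c)) \<and>
     (\<forall>a b c. mul a (add b c) = add (mul a b) (mul a c)) \<and>
     (\<forall>a b c. mul (add a b) c = add (mul a c) (mul b c))"

definition incline :: "('a \<Rightarrow> 'a \<Rightarrow> 'a) \<Rightarrow> ('a \<Rightarrow> 'a \<Rightarrow> 'a) \<Rightarrow> bool" where
  "incline add mul \<longleftrightarrow> semiring_ops add mul \<and>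
     (\<forall>r. add r r = r) \<and>
     (\<forall>x y. add x (mul x y) = x \<and> add x (mul y x) = x)"

definition is_zero :: "('a \<Rightarrow> 'a \<Rightarrow> 'a) \<Rightarrow> ('a \<Rightarrow> 'a \<Rightarrow> 'a) \<Rightarrow> 'a \<Rightarrow> bool" where
  "is_zero add mul z \<longleftrightarrow> (\<forall>r. add z r = r \<and> mul z r = z \<and> mul r z = z)"

definition sr_ideal :: "('a \<Rightarrow> 'a \<Rightarrow> 'a) \<Rightarrow> ('a \<Rightarrow> 'a \<Rightarrow> 'a) \<Rightarrow> 'a set \<Rightarrow> bool" where
  "sr_ideal add mul A \<longleftrightarrow> A \<noteq> {} \<and>
     (\<forall>a\<in>A. \<forall>b\<in>A. add a b \<in> A) \<and>
     (\<forall>a\<in>A. \<forall>r. mul r a \<in> A \<and> mul a r \<in> A)"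

definition trivial_ideal :: "('a \<Rightarrow> 'a \<Rightarrow> 'a) \<Rightarrow> ('a \<Rightarrow> 'a \<Rightarrow> 'a) \<Rightarrow> 'a set \<Rightarrow> bool" where
  "trivial_ideal add mul A \<longleftrightarrow> A = UNIV \<or> (\<exists>z. is_zero add mul z \<and> A = {z})"

definition k_closure :: "('a \<Rightarrow> 'a \<Rightarrow> 'a) \<Rightarrow> 'a set \<Rightarrow> 'a set" where
  "k_closure add A = {x. \<exists>a\<in>A. \<exists>b\<in>A. add x a = b}"

definition k_ideal :: "('a \<Rightarrow> 'a \<Rightarrow> 'a) \<Rightarrow> ('a \<Rightarrow> 'a \<Rightarrow> 'a) \<Rightarrow> 'a set \<Rightarrow> bool" where
  "k_ideal add mul A \<longleftrightarrow> sr_ideal add mul A \<and> A = k_closure add A"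

definition k_simple :: "('a \<Rightarrow> 'a \<Rightarrow> 'a) \<Rightarrow> ('a \<Rightarrow> 'a \<Rightarrow> 'a) \<Rightarrow> bool" where
  "k_simple add mul \<longleftrightarrow> (\<forall>A. k_ideal add mul A \<longrightarrow> trivial_ideal add mul A)"

end

theory Submission
  imports Defs
begin

lemma down_k_ideal:
  assumes inc: "incline add mul"
  shows "k_ideal add mul {x. add x a = a}"
proof -
  have as: "\<And>a b c. add (add a b) c = add a (add b c)"
   and cm: "\<And>a b. add a b = add b a"
   and id: "\<And>r. add r r = r"
   and ab1: "\<And>x y. add x (mul x y) = x" and ab2: "\<And>x y. add x (mul y x) = x"
    using inc unfolding incline_def semiring_ops_def by blast+
  let ?D = "{x. add x a = a}"
  have dc: "\<And>x y. add x y = y \<Longrightarrow> add y a = a \<Longrightarrow> add x a = a"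
  proof -
    fix x y assume h: "add x y = y" "add y a = a"
    have "add x a = add x (add y a)" using h by simp
    also have "\<dots> = add (add x y) a" by (simp only: as)
    finally show "add x a = a" using h by simp
  qed
  have "sr_ideal add mul ?D"
    unfolding sr_ideal_def
  proof (intro conjI ballI allI)
    show "?D \<noteq> {}" using id by auto
  next
    fix x y assume "x \<in> ?D" "y \<in> ?D" thus "add x y \<in> ?D" by (simp add: as)
  next
    fix x r assume x: "x \<in> ?D"
    have "add (mul r x) x = x" using ab2 cm by metis
    thus "mul r x \<in> ?D" using x dc by auto
    have "add (mul x r) x = x" using ab1 cm by metis
    thus "mul x r \<in> ?D" using x dc by auto
  qed
  moreover have "?D = k_closure add ?D"
  proof
    show "?D \<subseteq> k_closure add ?D" unfolding k_closure_def using id by auto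
    show "k_closure add ?D \<subseteq> ?D"
    proof
      fix x assume "x \<in> k_closure add ?D"
      then obtain a' b where a': "add a' a = a" and b: "add b a = a" and e: "add x a' = b"
        unfolding k_closure_def by auto
      have "add x b = add (add x x) a'" using e by (simp only: as)
      hence "add x b = b" using e by (simp only: id)
      thus "x \<in> ?D" using b dc by auto
    qed
  qed
  ultimately show ?thesis unfolding k_ideal_def by auto
qed

theorem lemma5p2:
  fixes add mul :: "'a \<Rightarrow> 'a \<Rightarrow> 'a"
  assumes "incline add mul"
    and "\<exists>a b c :: 'a. a \<noteq> b \<and> b \<noteq> c \<and> a \<noteq> c"
  shows "\<not> k_simple add mul"
proof
  assume ks: "k_simple add mul"
  have cm: "\<And>a b. add a b = add b a" and id: "\<And>r. add r r = r"
    using assms(1) unfolding incline_def semiring_ops_def by blast+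
  have tr: "\<And>a. trivial_ideal add mul {x. add x a = a}"
    using ks down_k_ideal[OF assms(1)] unfolding k_simple_def by blast
  have top: "\<And>a b. {x. add x a = a} = UNIV \<Longrightarrow> {x. add x b = b} = UNIV \<Longrightarrow> a = b"
    proof -
    fix a b assume "{x. add x a = a} = UNIV" "{x. add x b = b} = UNIV"
    hence "add b a = a" "add a b = b" by blast+
    thus "a = b" using cm by metis
  qed
  have bot: "\<And>a z. {x. add x a = a} = {z} \<Longrightarrow> a = z"
    using id by auto
  have zu: "\<And>z w. is_zero add mul z \<Longrightarrow> is_zero add mul w \<Longrightarrow> z = w"
    unfolding is_zero_def proof -
    fix z w assume "\<forall>r. add z r = r \<and> mul z r = z \<and> mul r z = z" "\<forall>r. add w r = r \<and> mul w r = w \<and> mul r w = w"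
    hence "add z w = w" "add w z = z" by blast+
    thus "z = w" using cm by metis
  qed
  obtain a b c :: 'a where d: "a \<noteq> b" "b \<noteq> c" "a \<noteq> c" using assms(2) by blast
  have cl: "\<And>a. {x. add x a = a} = UNIV \<or> is_zero add mul a"
    proof -
    fix a show "{x. add x a = a} = UNIV \<or> is_zero add mul a"
      using tr[of a] bot[of a] unfolding trivial_ideal_def by blast
  qed
  have t: "\<And>u v. {x. add x u = u} = UNIV \<Longrightarrow> {x. add x v = v} = UNIV \<Longrightarrow> u = v" by (rule top)
  show False
  proof (cases "is_zero add mul a")
    case True
    hence "\<not> is_zero add mul b" "\<not> is_zero add mul c" using zu d by blast+
    thus False using cl[of b] cl[of c] t d by blast
  next
    case False
    hence A: "{x. add x a = a} = UNIV" using cl by blast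
    show False
    proof (cases "is_zero add mul b")
      case True
      hence "\<not> is_zero add mul c" using zu d by blast
      thus False using cl[of c] A t d by blast
    next
      case False
      thus False using cl[of b] A t d by blast
    qed
  qed
qed

end
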